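(* Let $s\ge2$ and $l_1,\dots,l_s$ be positive integers with $\sum_{i=1}^s l_i\ge 3$. Then the graph $P_{l_1}\uplus P_{l_2}\uplus\cdots\uplus P_{l_s}\uplus K_1$ has a dispersed $4$-placement.
   Context: $P_m$ is the path on $m$ vertices, $K_1$ a single vertex, and $\uplus$ denotes vertex-disjoint union. For a graph $H$ on $m$ vertices, a $k$-placement of $H$ is a $k$-tuple $(\phi_1,\dots,\phi_k)$ of bijections $\phi_i:V(H)\to V(K_m)$ with pairwise disjoint edge sets $\phi_i(E(H))=\{\phi_i(x)\phi_i(y):xy\in E(H)\}$; it is dispersed if $\phi_i(v)\ne\phi_j(v)$ for every vertex $v$ and all $i\ne j$. *)

theory Defs
  imports Main
begin

text \<open>The complete graph K_m on m = card V vertices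
  has vertex set {0..<m}.\<close>

definition edge_image :: "('a \<Rightarrow> nat) \<Rightarrow> 'a set set \<Rightarrow> nat set set" where
  "edge_image f E = (\<lambda>e. f ` e) ` E"

definition is_placement :: "'a set \<Rightarrow> 'a set set \<Rightarrow> nat \<Rightarrow> (nat \<Rightarrow> 'a \<Rightarrow> nat) \<Rightarrow> bool" where
  "is_placement V E k \<phi> \<longleftrightarrow>
     (\<forall>i<k. bij_betw (\<phi> i) V {0..<card V}) \<and>
     (\<forall>i<k. \<forall>j<k. i \<noteq> j \<longrightarrow> edge_image (\<phi> i) E \<inter> edge_image (\<phi> j) E = {})"

definition is_dispersed_placement :: "'a set \<Rightarrow> 'a set set \<Rightarrow> nat \<Rightarrow> (nat \<Rightarrow> 'a \<Rightarrow> nat) \<Rightarrow> bool" where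
  "is_dispersed_placement V E k \<phi> \<longleftrightarrow>
     is_placement V E k \<phi> \<and>
     (\<forall>v\<in>V. \<forall>i<k. \<forall>j<k. i \<noteq> j \<longrightarrow> \<phi> i v \<noteq> \<phi> j v)"

text \<open>The graph P_{l_1} + ... + P_{l_s} + K_1: the path P_{l_i} has vertices (i,j), j < l i,
  with edges {(i,j),(i,j+1)}; the extra isolated vertex K_1 is (0,0).\<close>

definition paths_K1_verts :: "nat \<Rightarrow> (nat \<Rightarrow> nat) \<Rightarrow> (nat \<times> nat) set" where
  "paths_K1_verts s l = {(i, j). 1 \<le> i \<and> i \<le> s \<and> j < l i} \<union> {(0, 0)}"

definition paths_K1_edges :: "nat \<Rightarrow> (nat \<Rightarrow> nat) \<Rightarrow> (nat \<times> nat) set set" where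
  "paths_K1_edges s l = {{(i, j), (i, Suc j)} | i j. 1 \<le> i \<and> i \<le> s \<and> Suc j < l i}"

end

theory Submission
  imports Defs
begin

definition good :: "nat \<Rightarrow> nat \<Rightarrow> (nat \<Rightarrow> nat \<Rightarrow> nat) \<Rightarrow> bool" where
 "good m t g \<longleftrightarrow> (\<forall>i<4. bij_betw (g i) {0..<m} {0..<m}) \<and>
    (\<forall>i<4. \<forall>j<4. i \<noteq> j \<longrightarrow> (\<forall>x<m. g i x \<noteq> g j x)) \<and>
    (\<forall>i<4. \<forall>j<4. i \<noteq> j \<longrightarrow> (\<forall>k k'. 1 \<le> k \<longrightarrow> Suc k < m \<longrightarrow> k \<noteq> t \<longrightarrow>
        1 \<le> k' \<longrightarrow> Suc k' < m \<longrightarrow> k' \<noteq> t \<longrightarrow>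
        {g i k, g i (Suc k)} \<noteq> {g j k', g j (Suc k')}))"

lemma transfer:
  assumes bij: "bij_betw \<psi> V {0..<m}"
   and g: "good m t g"
   and eF: "\<forall>e\<in>E. \<exists>k. 1 \<le> k \<and> Suc k < m \<and> k \<noteq> t \<and> \<psi> ` e = {k, Suc k}"
  shows "is_dispersed_placement V E 4 (\<lambda>i. g i \<circ> \<psi>)"
proof -
  have cV: "card V = m" using bij_betw_same_card[OF bij] by simp
  have P1: "\<forall>i<4. bij_betw (g i \<circ> \<psi>) V {0..<card V}"
    using g bij cV unfolding good_def by (auto intro: bij_betw_trans)
  have P2: "\<forall>i<4. \<forall>j<4. i \<noteq> j \<longrightarrow> edge_image (g i \<circ> \<psi>) E \<inter> edge_image (g j \<circ> \<psi>) E = {}"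
  proof (intro allI impI)
    fix i j :: nat assume ij: "i<4" "j<4" "i\<noteq>j"
    show "edge_image (g i \<circ> \<psi>) E \<inter> edge_image (g j \<circ> \<psi>) E = {}"
    proof (rule ccontr)
      assume "edge_image (g i \<circ> \<psi>) E \<inter> edge_image (g j \<circ> \<psi>) E \<noteq> {}"
      then obtain e e' where e: "e\<in>E" "e'\<in>E" and eq: "(g i \<circ> \<psi>) ` e = (g j \<circ> \<psi>) ` e'"
        unfolding edge_image_def by auto
      obtain k where k: "1 \<le> k" "Suc k < m" "k \<noteq> t" "\<psi> ` e = {k, Suc k}" using eF e(1) by blast
      obtain k' where k': "1 \<le> k'" "Suc k' < m" "k' \<noteq> t" "\<psi> ` e' = {k', Suc k'}" using eF e(2) by blast
      have "(g i \<circ> \<psi>) ` e = g i ` (\<psi> ` e)" by (rule image_comp[symmetric])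
      then have "(g i \<circ> \<psi>) ` e = {g i k, g i (Suc k)}" using k(4) by simp
      moreover have "(g j \<circ> \<psi>) ` e' = g j ` (\<psi> ` e')" by (rule image_comp[symmetric])
      moreover have "(g j \<circ> \<psi>) ` e' = {g j k', g j (Suc k')}" using k'(4) calculation(2) by simp
      ultimately have "{g i k, g i (Suc k)} = {g j k', g j (Suc k')}" using eq by simp
      then show False using g ij k k' unfolding good_def by blast
    qed
  qed
  have P3: "\<forall>v\<in>V. \<forall>i<4. \<forall>j<4. i \<noteq> j \<longrightarrow> (g i \<circ> \<psi>) v \<noteq> (g j \<circ> \<psi>) v"
  proof (intro ballI allI impI)
    fix v i j assume "v \<in> V" "i < (4::nat)" "j < (4::nat)" "i \<noteq> j"
    moreover have "\<psi> v < m" using bij \<open>v \<in> V\<close> by (auto dest: bij_betwE)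
    ultimately show "(g i \<circ> \<psi>) v \<noteq> (g j \<circ> \<psi>) v" using g unfolding good_def by auto
  qed
  show ?thesis unfolding is_dispersed_placement_def is_placement_def using P1 P2 P3 by blast
qed

definition check :: "nat \<Rightarrow> nat \<Rightarrow> nat list list \<Rightarrow> bool" where
"check m t L = (let ks = filter (\<lambda>k. k\<noteq>t) [1..<m-1] in length L = 4 \<and>
  list_all (\<lambda>xs. length xs = m \<and> distinct xs \<and> list_all (\<lambda>x. x < m) xs) L \<and>
  list_all (\<lambda>i. list_all (\<lambda>j. i = j \<or> (list_all (\<lambda>x. L!i!x \<noteq> L!j!x) [0..<m] \<and>
   list_all (\<lambda>k. list_all (\<lambda>k'. \<not>((L!i!k = L!j!k' \<and> L!i!(Suc k) = L!j!(Suc k')) \<or>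
     (L!i!k = L!j!(Suc k') \<and> L!i!(Suc k) = L!j!k'))) ks) ks)) [0..<4]) [0..<4])"

lemma check_good:
  assumes c: "check m t L"
  shows "good m t (\<lambda>i x. L ! i ! x)"
proof -
  have len: "length L = 4" using c unfolding check_def Let_def by simp
  have row: "\<And>i. i < 4 \<Longrightarrow> length (L!i) = m \<and> distinct (L!i) \<and> (\<forall>x\<in>set (L!i). x < m)"
    using c len unfolding check_def Let_def list_all_iff by (metis nth_mem)
  have B: "\<forall>i<4. bij_betw (\<lambda>x. L ! i ! x) {0..<m} {0..<m}"
  proof (intro allI impI)
    fix i :: nat assume "i < 4"
    then have r: "length (L!i) = m" "distinct (L!i)" "\<forall>x\<in>set (L!i). x < m" using row by auto
    have "set (L!i) \<subseteq> {0..<m}" using r by auto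
    moreover have "card (set (L!i)) = card {0..<m}" using r distinct_card by fastforce
    ultimately have s: "set (L!i) = {0..<m}" by (simp add: card_subset_eq)
    have "bij_betw ((!) (L!i)) {..<length (L!i)} (set (L!i))"
      by (rule bij_betw_nth) (use r in auto)
    then show "bij_betw (\<lambda>x. L ! i ! x) {0..<m} {0..<m}" using s r(1)
      by (simp add: lessThan_atLeast0)
  qed
  have D: "\<forall>i<4. \<forall>j<4. i \<noteq> j \<longrightarrow> (\<forall>x<m. L!i!x \<noteq> L!j!x)"
  proof (intro allI impI)
    fix i j x :: nat assume h: "i<4" "j<4" "i\<noteq>j" "x<m"
    have i4: "i \<in> set [0..<4]" "j \<in> set [0..<4]" "x \<in> set [0..<m]" using h by auto
    show "L!i!x \<noteq> L!j!x"
      using c i4 h(3) unfolding check_def Let_def list_all_iff by blast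
  qed
  have E: "\<forall>i<4. \<forall>j<4. i \<noteq> j \<longrightarrow> (\<forall>k k'. 1 \<le> k \<longrightarrow> Suc k < m \<longrightarrow> k \<noteq> t \<longrightarrow>
        1 \<le> k' \<longrightarrow> Suc k' < m \<longrightarrow> k' \<noteq> t \<longrightarrow>
        {L!i!k, L!i!(Suc k)} \<noteq> {L!j!k', L!j!(Suc k')})"
  proof (intro allI impI)
    fix i j k k' :: nat
    assume h: "i<4" "j<4" "i\<noteq>j" "1 \<le> k" "Suc k < m" "k \<noteq> t" "1 \<le> k'" "Suc k' < m" "k' \<noteq> t"
    then have "k \<in> set (filter (\<lambda>k. k\<noteq>t) [1..<m-1])" "k' \<in> set (filter (\<lambda>k. k\<noteq>t) [1..<m-1])"
      by auto
    moreover have "i \<in> set [0..<4]" "j \<in> set [0..<4]" using h by auto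
    ultimately have "\<not>((L!i!k = L!j!k' \<and> L!i!(Suc k) = L!j!(Suc k')) \<or>
     (L!i!k = L!j!(Suc k') \<and> L!i!(Suc k) = L!j!k'))"
      using c h(3) unfolding check_def Let_def list_all_iff by blast
    then show "{L!i!k, L!i!(Suc k)} \<noteq> {L!j!k', L!j!(Suc k')}" by (auto simp: doubleton_eq_iff)
  qed
  show ?thesis unfolding good_def using B D E by blast
qed

lemma small:
  assumes "4 \<le> m" "m \<le> 7" "1 \<le> t" "t + 2 \<le> m"
  shows "\<exists>g. good m t g"
proof -
  have "(m = 4 \<and> (t = 1 \<or> t = 2)) \<or> (m = 5 \<and> (t = 1 \<or> t = 2 \<or> t = 3)) \<or>
        (m = 6 \<and> (t = 1 \<or> t = 2 \<or> t = 3 \<or> t = 4)) \<or> (m = 7 \<and> (t = 1 \<or> t = 2 \<or> t = 3 \<or> t = 4 \<or> t = 5))"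
    using assms by presburger
  then show ?thesis
  proof (elim disjE conjE)
    assume "m = 4" "t = 1"
    have "check 4 1 [[0, 1, 2, 3], [2, 0, 3, 1], [1, 3, 0, 2], [3, 2, 1, 0]]" by code_simp
    then show ?thesis using \<open>m = 4\<close> \<open>t = 1\<close> by (blast intro: check_good)
  next
    assume "m = 4" "t = 2"
    have "check 4 2 [[0, 1, 2, 3], [1, 2, 3, 0], [3, 0, 1, 2], [2, 3, 0, 1]]" by code_simp
    then show ?thesis using \<open>m = 4\<close> \<open>t = 2\<close> by (blast intro: check_good)
  next
    assume "m = 5" "t = 1"
    have "check 5 1 [[0, 1, 2, 3, 4], [1, 4, 3, 0, 2], [3, 0, 4, 2, 1], [2, 3, 1, 4, 0]]" by code_simp
    then show ?thesis using \<open>m = 5\<close> \<open>t = 1\<close> by (blast intro: check_good)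
  next
    assume "m = 5" "t = 2"
    have "check 5 2 [[0, 1, 2, 3, 4], [2, 0, 3, 4, 1], [1, 4, 0, 2, 3], [4, 3, 1, 0, 2]]" by code_simp
    then show ?thesis using \<open>m = 5\<close> \<open>t = 2\<close> by (blast intro: check_good)
  next
    assume "m = 5" "t = 3"
    have "check 5 3 [[0, 1, 2, 3, 4], [1, 3, 4, 2, 0], [4, 0, 3, 1, 2], [2, 4, 1, 0, 3]]" by code_simp
    then show ?thesis using \<open>m = 5\<close> \<open>t = 3\<close> by (blast intro: check_good)
  next
    assume "m = 6" "t = 1"
    have "check 6 1 [[0, 1, 2, 3, 4, 5], [2, 4, 5, 0, 1, 3], [3, 0, 4, 1, 5, 2], [5, 3, 1, 2, 0, 4]]" by code_simp
    then show ?thesis using \<open>m = 6\<close> \<open>t = 1\<close> by (blast intro: check_good)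
  next
    assume "m = 6" "t = 2"
    have "check 6 2 [[0, 1, 2, 3, 4, 5], [2, 3, 5, 4, 0, 1], [3, 4, 1, 0, 5, 2], [5, 2, 4, 1, 3, 0]]" by code_simp
    then show ?thesis using \<open>m = 6\<close> \<open>t = 2\<close> by (blast intro: check_good)
  next
    assume "m = 6" "t = 3"
    have "check 6 3 [[0, 1, 2, 3, 4, 5], [1, 4, 3, 5, 2, 0], [5, 0, 4, 2, 1, 3], [4, 3, 0, 1, 5, 2]]" by code_simp
    then show ?thesis using \<open>m = 6\<close> \<open>t = 3\<close> by (blast intro: check_good)
  next
    assume "m = 6" "t = 4"
    have "check 6 4 [[0, 1, 2, 3, 4, 5], [2, 0, 4, 1, 5, 3], [4, 5, 3, 0, 1, 2], [3, 4, 5, 2, 0, 1]]" by code_simp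
    then show ?thesis using \<open>m = 6\<close> \<open>t = 4\<close> by (blast intro: check_good)
  next
    assume "m = 7" "t = 1"
    have "check 7 1 [[0, 1, 2, 3, 4, 5, 6], [2, 5, 3, 1, 0, 6, 4], [6, 3, 0, 4, 2, 1, 5], [1, 4, 5, 2, 6, 3, 0]]" by code_simp
    then show ?thesis using \<open>m = 7\<close> \<open>t = 1\<close> by (blast intro: check_good)
  next
    assume "m = 7" "t = 2"
    have "check 7 2 [[0, 1, 2, 3, 4, 5, 6], [2, 3, 5, 0, 6, 1, 4], [5, 6, 4, 1, 3, 2, 0], [1, 4, 0, 5, 2, 6, 3]]" by code_simp
    then show ?thesis using \<open>m = 7\<close> \<open>t = 2\<close> by (blast intro: check_good)
  next
    assume "m = 7" "t = 3"
    have "check 7 3 [[0, 1, 2, 3, 4, 5, 6], [1, 4, 6, 2, 3, 0, 5], [4, 2, 0, 6, 5, 3, 1], [2, 6, 1, 5, 0, 4, 3]]" by code_simp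
    then show ?thesis using \<open>m = 7\<close> \<open>t = 3\<close> by (blast intro: check_good)
  next
    assume "m = 7" "t = 4"
    have "check 7 4 [[0, 1, 2, 3, 4, 5, 6], [2, 3, 1, 0, 6, 4, 5], [4, 6, 3, 5, 1, 2, 0], [1, 4, 6, 2, 5, 0, 3]]" by code_simp
    then show ?thesis using \<open>m = 7\<close> \<open>t = 4\<close> by (blast intro: check_good)
  next
    assume "m = 7" "t = 5"
    have "check 7 5 [[0, 1, 2, 3, 4, 5, 6], [2, 0, 5, 1, 3, 6, 4], [5, 4, 1, 6, 0, 3, 2], [1, 5, 6, 4, 2, 0, 3]]" by code_simp
    then show ?thesis using \<open>m = 7\<close> \<open>t = 5\<close> by (blast intro: check_good)
  qed
qed



definition zz :: "nat \<Rightarrow> nat \<Rightarrow> nat" where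
  "zz m k = (if k = 0 then 0 else if odd k then (k+1) div 2 else m - k div 2)"

lemma zz_lt: "k < m \<Longrightarrow> zz m k < m"
  unfolding zz_def by auto

lemma zz_inj: "inj_on (zz m) {0..<m}"
proof (rule inj_onI)
  fix a b assume a: "a \<in> {0..<m}" and b: "b \<in> {0..<m}" and e: "zz m a = zz m b"
  show "a = b"
    using a b e unfolding zz_def by (auto split: if_splits elim!: oddE evenE)
qed

lemma modcan: "(x::nat) < m \<Longrightarrow> y < m \<Longrightarrow> (x + i) mod m = (y + (i::nat)) mod m \<Longrightarrow> x = y"
proof -
  have k: "\<And>a b. a < m \<Longrightarrow> b < m \<Longrightarrow> a \<le> b \<Longrightarrow> (a + i) mod m = (b + (i::nat)) mod m \<Longrightarrow> a = b"
  proof -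
    fix a b :: nat assume h: "a < m" "b < m" "a \<le> b" "(a + i) mod m = (b + i) mod m"
    have "m dvd (b + i) - (a + i)" using h mod_eq_dvd_iff_nat[of "a+i" "b+i" m] by simp
    then have d: "m dvd b - a" by simp
    show "a = b"
    proof (rule ccontr)
      assume "a \<noteq> b"
      then have "0 < b - a" "b - a < m" using h by auto
      then show False using d nat_dvd_not_less by blast
    qed
  qed
  assume "x < m" "y < m" "(x + i) mod m = (y + i) mod m"
  then show "x = y" using k[of x y] k[of y x] by (cases "x \<le> y") auto
qed

lemma zz_sum: "Suc k < m \<Longrightarrow> (zz m k + zz m (Suc k)) mod m \<in> {0, 1}"
  unfolding zz_def by (auto elim!: oddE evenE simp: mod_Suc)

lemma summod: "((x + i) mod m + (y + i) mod m) mod m = ((x + y) mod m + 2 * (i::nat)) mod m"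
proof -
  have "((x + i) mod m + (y + i) mod m) mod m = (x + i + (y + i)) mod m" by (rule mod_add_eq)
  also have "x + i + (y + i) = x + y + 2 * i" by simp
  also have "(x + y + 2 * i) mod m = ((x + y) mod m + 2 * i) mod m" by (rule mod_add_left_eq[symmetric])
  finally show ?thesis .
qed

lemma big:
  assumes m: "8 \<le> m"
  shows "good m t (\<lambda>i k. (zz m k + i) mod m)"
proof -
  have B: "\<forall>i<4. bij_betw (\<lambda>k. (zz m k + i) mod m) {0..<m} {0..<m}"
  proof (intro allI impI)
    fix i :: nat assume "i < 4"
    have inj: "inj_on (\<lambda>k. (zz m k + i) mod m) {0..<m}"
    proof (rule inj_onI)
      fix a b assume a: "a \<in> {0..<m}" "b \<in> {0..<m}" "(zz m a + i) mod m = (zz m b + i) mod m"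
      have "a < m" "b < m" using a by auto
      then have "zz m a = zz m b" using modcan[OF zz_lt zz_lt a(3)] by blast
      then show "a = b" using zz_inj a(1,2) by (metis inj_on_def)
    qed
    moreover have sub: "(\<lambda>k. (zz m k + i) mod m) ` {0..<m} \<subseteq> {0..<m}" using m by auto
    ultimately have "(\<lambda>k. (zz m k + i) mod m) ` {0..<m} = {0..<m}"
      using endo_inj_surj[of "{0..<m}"] by blast
    then show "bij_betw (\<lambda>k. (zz m k + i) mod m) {0..<m} {0..<m}"
      using inj by (simp add: bij_betw_def)
  qed
  have D: "\<forall>i<4. \<forall>j<4. i \<noteq> j \<longrightarrow> (\<forall>x<m. (zz m x + i) mod m \<noteq> (zz m x + j) mod m)"
  proof (intro allI impI)
    fix i j x :: nat assume h: "i < 4" "j < 4" "i \<noteq> j" "x < m"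
    show "(zz m x + i) mod m \<noteq> (zz m x + j) mod m"
    proof
      assume "(zz m x + i) mod m = (zz m x + j) mod m"
      then have "(i + zz m x) mod m = (j + zz m x) mod m" by (simp add: add.commute)
      then have "i = j" using modcan[of i m j "zz m x"] h m by simp
      then show False using h by simp
    qed
  qed
  have E: "\<forall>i<4. \<forall>j<4. i \<noteq> j \<longrightarrow> (\<forall>k k'. 1 \<le> k \<longrightarrow> Suc k < m \<longrightarrow> k \<noteq> t \<longrightarrow>
        1 \<le> k' \<longrightarrow> Suc k' < m \<longrightarrow> k' \<noteq> t \<longrightarrow>
        {(zz m k + i) mod m, (zz m (Suc k) + i) mod m} \<noteq> {(zz m k' + j) mod m, (zz m (Suc k') + j) mod m})"
  proof (intro allI impI notI)
    fix i j k k' :: nat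
    assume h: "i<4" "j<4" "i\<noteq>j" "1 \<le> k" "Suc k < m" "k \<noteq> t" "1 \<le> k'" "Suc k' < m" "k' \<noteq> t"
      and eq: "{(zz m k + i) mod m, (zz m (Suc k) + i) mod m} = {(zz m k' + j) mod m, (zz m (Suc k') + j) mod m}"
    have "(zz m k + i) mod m + (zz m (Suc k) + i) mod m = (zz m k' + j) mod m + (zz m (Suc k') + j) mod m"
      using eq by (auto simp: doubleton_eq_iff)
    then have "((zz m k + zz m (Suc k)) mod m + 2 * i) mod m = ((zz m k' + zz m (Suc k')) mod m + 2 * j) mod m"
      by (metis summod)
    moreover have r: "(zz m k + zz m (Suc k)) mod m \<in> {0,1}" "(zz m k' + zz m (Suc k')) mod m \<in> {0,1}"
      using zz_sum h(5,8) by auto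
    ultimately have "(zz m k + zz m (Suc k)) mod m + 2 * i = (zz m k' + zz m (Suc k')) mod m + 2 * j"
      using h(1,2) m by auto
    then show False using r h(1-3) by auto
  qed
  show ?thesis unfolding good_def using B D E by blast
qed



definition pre :: "(nat \<Rightarrow> nat) \<Rightarrow> nat \<Rightarrow> nat" where
  "pre l i = (\<Sum>r=1..i. l r)"

lemma pre_0[simp]: "pre l 0 = 0" by (simp add: pre_def)
lemma pre_Suc[simp]: "pre l (Suc i) = pre l i + l (Suc i)" by (simp add: pre_def)
lemma pre_mono: "a \<le> b \<Longrightarrow> pre l a \<le> pre l b"
  by (induction b) (auto simp: le_Suc_eq)
lemma pre_prev: "1 \<le> i \<Longrightarrow> pre l i = pre l (i - 1) + l i"
  by (cases i) auto

definition psi :: "(nat \<Rightarrow> nat) \<Rightarrow> nat \<times> nat \<Rightarrow> nat" where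
  "psi l v = (if fst v = 0 then 0 else Suc (pre l (fst v - 1) + snd v))"

lemma cover: "x < pre l s \<Longrightarrow> \<exists>i j. 1 \<le> i \<and> i \<le> s \<and> j < l i \<and> x = pre l (i - 1) + j"
proof (induction s)
  case 0 then show ?case by simp
next
  case (Suc s)
  show ?case
  proof (cases "x < pre l s")
    case True then show ?thesis using Suc.IH by (meson le_SucI)
  next
    case False
    then show ?thesis using Suc.prems
      by (intro exI[of _ "Suc s"] exI[of _ "x - pre l s"]) auto
  qed
qed

lemma psi_bij:
  "bij_betw (psi l) (paths_K1_verts s l) {0..<Suc (pre l s)}"
proof -
  let ?V = "paths_K1_verts s l"
  have lt: "\<And>i j. 1 \<le> i \<Longrightarrow> j < l i \<Longrightarrow> pre l (i - 1) + j < pre l i"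
    using pre_prev by fastforce
  have inj: "inj_on (psi l) ?V"
  proof (rule inj_onI)
    fix v w assume v: "v \<in> ?V" and w: "w \<in> ?V" and e: "psi l v = psi l w"
    show "v = w"
    proof (cases "fst v = 0 \<or> fst w = 0")
      case True then show ?thesis using v w e unfolding paths_K1_verts_def psi_def by (auto split: if_splits)
    next
      case False
      obtain i j where vij: "v = (i,j)" "1 \<le> i" "i \<le> s" "j < l i" using v False unfolding paths_K1_verts_def by auto
      obtain i' j' where wij: "w = (i',j')" "1 \<le> i'" "i' \<le> s" "j' < l i'" using w False unfolding paths_K1_verts_def by auto
      have e2: "pre l (i - 1) + j = pre l (i' - 1) + j'" using e vij wij unfolding psi_def by simp
      have "\<not> i < i'"
      proof
        assume "i < i'"
        then have "pre l i \<le> pre l (i' - 1)" by (intro pre_mono) simp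
        then show False using lt[OF vij(2,4)] e2 by simp
      qed
      moreover have "\<not> i' < i"
      proof
        assume "i' < i"
        then have "pre l i' \<le> pre l (i - 1)" by (intro pre_mono) simp
        then show False using lt[OF wij(2,4)] e2 by simp
      qed
      ultimately have "i = i'" by simp
      then show ?thesis using vij wij e2 by simp
    qed
  qed
  have img: "psi l ` ?V = {0..<Suc (pre l s)}"
  proof
    show "psi l ` ?V \<subseteq> {0..<Suc (pre l s)}"
    proof
      fix x assume "x \<in> psi l ` ?V"
      then obtain v where v: "v \<in> ?V" "x = psi l v" by auto
      show "x \<in> {0..<Suc (pre l s)}"
      proof (cases "fst v = 0")
        case True then show ?thesis using v unfolding psi_def by simp
      next
        case False
        obtain i j where vij: "v = (i,j)" "1 \<le> i" "i \<le> s" "j < l i" using v False unfolding paths_K1_verts_def by auto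
        have "pre l i \<le> pre l s" using vij pre_mono by blast
        then show ?thesis using lt[OF vij(2,4)] v(2) vij(1,2) unfolding psi_def by simp
      qed
    qed
  next
    show "{0..<Suc (pre l s)} \<subseteq> psi l ` ?V"
    proof
      fix x assume x: "x \<in> {0..<Suc (pre l s)}"
      show "x \<in> psi l ` ?V"
      proof (cases x)
        case 0
        have "(0,0) \<in> ?V" unfolding paths_K1_verts_def by simp
        then show ?thesis using 0 unfolding psi_def by force
      next
        case (Suc y)
        then have "y < pre l s" using x by simp
        then obtain i j where ij: "1 \<le> i" "i \<le> s" "j < l i" "y = pre l (i - 1) + j" using cover by blast
        have "(i,j) \<in> ?V" using ij unfolding paths_K1_verts_def by simp
        moreover have "psi l (i,j) = x" using ij Suc unfolding psi_def by simp
        ultimately show ?thesis by force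
      qed
    qed
  qed
  show ?thesis using inj img by (simp add: bij_betw_def)
qed

lemma psi_edges:
  assumes "2 \<le> s"
  shows "\<forall>e\<in>paths_K1_edges s l. \<exists>k. 1 \<le> k \<and> Suc k < Suc (pre l s) \<and> k \<noteq> l 1 \<and> psi l ` e = {k, Suc k}"
proof
  fix e assume "e \<in> paths_K1_edges s l"
  then obtain i j where ij: "e = {(i, j), (i, Suc j)}" "1 \<le> i" "i \<le> s" "Suc j < l i"
    unfolding paths_K1_edges_def by auto
  let ?k = "Suc (pre l (i - 1) + j)"
  have "psi l (i, j) = ?k" "psi l (i, Suc j) = Suc ?k" using ij(2) unfolding psi_def by auto
  then have im: "psi l ` e = {?k, Suc ?k}" using ij(1) by simp
  have "pre l i \<le> pre l s" using ij pre_mono by blast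
  moreover have "pre l i = pre l (i - 1) + l i" using pre_prev ij(2) by blast
  ultimately have r: "Suc ?k < Suc (pre l s)" using ij(4) by simp
  have ne: "?k \<noteq> l 1"
  proof (cases "i = 1")
    case True then show ?thesis using ij(4) by simp
  next
    case False
    then have "pre l 1 \<le> pre l (i - 1)" using ij(2) by (intro pre_mono) simp
    moreover have "pre l 1 = l 1" by (simp add: pre_def)
    ultimately show ?thesis by simp
  qed
  show "\<exists>k. 1 \<le> k \<and> Suc k < Suc (pre l s) \<and> k \<noteq> l 1 \<and> psi l ` e = {k, Suc k}"
  proof (rule exI[of _ ?k], intro conjI)
    show "1 \<le> ?k" by simp
  qed (fact r ne im)+
qed

theorem lemma2p7:
  fixes s :: nat and l :: "nat \<Rightarrow> nat"
  assumes "s \<ge> 2"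
    and "\<forall>i\<in>{1..s}. l i > 0"
    and "(\<Sum>i=1..s. l i) \<ge> 3"
  shows "\<exists>\<phi>. is_dispersed_placement (paths_K1_verts s l) (paths_K1_edges s l) 4 \<phi>"
proof -
  define m where "m = Suc (pre l s)"
  define t where "t = l 1"
  have m4: "4 \<le> m" using assms(3) unfolding m_def pre_def by simp
  have "1 \<in> {1..s}" "2 \<in> {1..s}" using assms(1) by auto
  then have l1: "l 1 > 0" and l2: "l 2 > 0" using assms(2) by blast+
  have t1: "1 \<le> t" using l1 unfolding t_def by simp
  have "pre l 2 \<le> pre l s" using assms(1) pre_mono by blast
  moreover have "pre l (Suc (Suc 0)) = l (Suc 0) + l (Suc (Suc 0))" by simp
  then have "pre l 2 = l 1 + l 2" by (simp add: numeral_2_eq_2)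
  ultimately have t2: "t + 2 \<le> m" using l2 unfolding m_def t_def by linarith
  have "\<exists>g. good m t g"
  proof (cases "m \<le> 7")
    case True then show ?thesis using small[OF m4 True t1 t2] by blast
  next
    case False then have "8 \<le> m" by linarith
    then show ?thesis using big[of m t] by blast
  qed
  then obtain g where g: "good m t g" by blast
  have e: "\<forall>e\<in>paths_K1_edges s l. \<exists>k. 1 \<le> k \<and> Suc k < m \<and> k \<noteq> t \<and> psi l ` e = {k, Suc k}"
    using psi_edges[OF assms(1), of l] unfolding m_def t_def .
  have b: "bij_betw (psi l) (paths_K1_verts s l) {0..<m}" using psi_bij[of l s] unfolding m_def .
  show ?thesis using transfer[OF b g e] by blast
qed

end
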